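(* Let $K$ be a field (of arbitrary characteristic) and $V$ a homogeneous $K$-subspace of $K[x]$. Then $V$ is a Mathieu subspace of $K[x]$ if and only if one of the following holds: 1) $V=K[x]$; 2) $\dim_K V<\infty$ and $1\notin V$; 3) $1\notin V$ and there exists $N\ge1$ such that the ideal $x^NK[x]$ is contained in $V$; 4) $V$ is spanned over $K$ by the monomials $x^{n_i}$ for a strictly increasing infinite sequence of positive integers $\{n_i\mid i\ge1\}$ such that there is no integer $d\ge1$ with $md\in\{n_i\mid i\ge1\}$ for all $m\ge1$.
   Context: A $K$-subspace $V$ of $K[x]$ is homogeneous if it is spanned by the monomials $x^n$ it contains (equivalently, the homogeneous components of each element of $V$ lie in $V$). A $K$-subspace $V$ of a commutative $K$-algebra $\mathcal{A}$ is a Mathieu subspace if for all $a,b\in\mathcal{A}$ with $a^m\in V$ for all $m\ge 1$, one has $a^mb\in V$ for all $m\gg 0$. *)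

theory Defs
  imports "HOL-Computational_Algebra.Polynomial"
begin

definition poly_span :: "'a::field poly set \<Rightarrow> 'a poly set" where
  "poly_span S = {(\<Sum>s\<in>F. smult (c s) s) | F c. finite F \<and> F \<subseteq> S}"

definition poly_subspace :: "'a::field poly set \<Rightarrow> bool" where
  "poly_subspace V \<longleftrightarrow> 0 \<in> V \<and> (\<forall>p\<in>V. \<forall>q\<in>V. p + q \<in> V) \<and> (\<forall>c. \<forall>p\<in>V. smult c p \<in> V)"

definition homogeneous_subspace :: "'a::field poly set \<Rightarrow> bool" where
  "homogeneous_subspace V \<longleftrightarrow> poly_subspace V \<and> V = poly_span {monom 1 n | n. monom 1 n \<in> V}"

definition finite_dim :: "'a::field poly set \<Rightarrow> bool" where
  "finite_dim V \<longleftrightarrow> (\<exists>S. finite S \<and> V \<subseteq> poly_span S)"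

definition mathieu_subspace :: "'a::field poly set \<Rightarrow> bool" where
  "mathieu_subspace V \<longleftrightarrow> poly_subspace V \<and>
     (\<forall>a b. (\<forall>m\<ge>1. a ^ m \<in> V) \<longrightarrow> (\<exists>N. \<forall>m\<ge>N. a ^ m * b \<in> V))"

end

theory Submission
  imports Defs "HOL-Library.Infinite_Set"
begin

lemma span_coeff:
  assumes "p \<in> poly_span M" "coeff p k \<noteq> 0"
  shows "\<exists>s\<in>M. coeff s k \<noteq> 0"
proof -
  obtain F c where F: "finite F" "F \<subseteq> M" "p = (\<Sum>s\<in>F. smult (c s) s)"
    using assms(1) unfolding poly_span_def by auto
  have "coeff p k = (\<Sum>s\<in>F. c s * coeff s k)" using F(3) by (simp add: coeff_sum)
  show ?thesis
  proof (rule ccontr)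
    assume "\<not> ?thesis"
    hence "\<forall>s\<in>F. coeff s k = 0" using F(2) by auto
    hence "coeff p k = 0" using \<open>coeff p k = _\<close> by simp
    thus False using assms(2) by simp
  qed
qed

lemma span_monom_coeff:
  assumes "p \<in> poly_span {monom 1 n | n. P n}" "coeff p k \<noteq> 0"
  shows "P k"
proof -
  from span_coeff[OF assms] obtain s :: "'a::field poly" where s: "s \<in> {monom 1 n | n. P n}" and sk: "coeff s k \<noteq> 0" ..
  from s obtain n where "s = monom 1 n" "P n" by auto
  with sk show ?thesis by (simp add: coeff_monom split: if_splits)
qed

lemma hom_coeff:
  assumes "homogeneous_subspace V" "p \<in> V" "coeff p k \<noteq> 0"
  shows "monom 1 k \<in> V"
proof -
  have "p \<in> poly_span {monom 1 n | n. monom 1 n \<in> V}"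
    using assms(1,2) unfolding homogeneous_subspace_def by blast
  thus ?thesis using span_monom_coeff[where P="\<lambda>n. monom 1 n \<in> V"] assms(3) by blast
qed

lemma subspace_sum:
  assumes "poly_subspace V" "finite A" "\<forall>i\<in>A. f i \<in> V"
  shows "sum f A \<in> V"
  using assms(2,3)
proof (induction A rule: finite_induct)
  case empty then show ?case using assms(1) by (simp add: poly_subspace_def)
next
  case (insert x F) then show ?case using assms(1) by (simp add: poly_subspace_def)
qed

lemma subspace_from_monoms:
  assumes "poly_subspace V" "\<And>i. coeff p i \<noteq> 0 \<Longrightarrow> monom 1 i \<in> V"
  shows "p \<in> V"
proof -
  have "(\<Sum>i\<le>degree p. monom (coeff p i) i) \<in> V"
  proof (rule subspace_sum[OF assms(1)], simp, intro ballI)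
    fix i
    show "monom (coeff p i) i \<in> V"
    proof (cases "coeff p i = 0")
      case True then show ?thesis using assms(1) by (simp add: poly_subspace_def)
    next
      case False
      then have "smult (coeff p i) (monom 1 i) \<in> V"
        using assms by (simp add: poly_subspace_def)
      then show ?thesis by (simp add: smult_monom)
    qed
  qed
  thus ?thesis by (simp add: poly_as_sum_of_monoms)
qed

lemma power_monoms:
  assumes "homogeneous_subspace V" "\<forall>m\<ge>1. a ^ m \<in> V" "a \<noteq> 0" "m \<ge> 1"
  shows "monom 1 (m * degree a) \<in> V"
proof -
  have "coeff (a ^ m) (degree (a ^ m)) \<noteq> 0"
    using assms(3) by (simp add: lead_coeff_power)
  moreover have "degree (a ^ m) = m * degree a" using assms(3) by (simp add: degree_power_eq)
  ultimately show ?thesis using hom_coeff[OF assms(1)] assms(2,4) by metis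
qed

theorem proposition3p5:
  fixes V :: "'a::field poly set"
  assumes "homogeneous_subspace V"
  shows "mathieu_subspace V \<longleftrightarrow>
    V = UNIV
    \<or> (finite_dim V \<and> 1 \<notin> V)
    \<or> (1 \<notin> V \<and> (\<exists>N\<ge>1. {monom 1 N * p | p. True} \<subseteq> V))
    \<or> (\<exists>n :: nat \<Rightarrow> nat. strict_mono n \<and> (\<forall>i. n i \<ge> 1)
         \<and> V = poly_span (range (\<lambda>i. monom 1 (n i)))
         \<and> \<not> (\<exists>d::nat\<ge>1. \<forall>m::nat\<ge>1. m * d \<in> range n))"
  (is "_ \<longleftrightarrow> ?C1 \<or> ?C2 \<or> ?C3 \<or> ?C4")
proof -
  have sub: "poly_subspace V" using assms unfolding homogeneous_subspace_def by blast
  have zero: "0 \<in> V" using sub unfolding poly_subspace_def by blast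
  have one: "(1::'a poly) = monom 1 0" by (simp add: monom_0 one_pCons)
  have Vspan: "V = poly_span {monom 1 n | n. monom 1 n \<in> V}"
    using assms unfolding homogeneous_subspace_def by blast
  show ?thesis
  proof
    assume M: "mathieu_subspace V"
    have Mx: "\<And>a b. (\<forall>m\<ge>1. a ^ m \<in> V) \<Longrightarrow> \<exists>N. \<forall>m\<ge>N. a ^ m * b \<in> V"
      using M unfolding mathieu_subspace_def by blast
    show "?C1 \<or> ?C2 \<or> ?C3 \<or> ?C4"
    proof (cases "1 \<in> V")
      case True
      have allm: "monom 1 k \<in> V" for k
      proof -
        have "\<forall>m\<ge>1. (1::'a poly) ^ m \<in> V" using True by simp
        then obtain N where "\<forall>m\<ge>N. (1::'a poly) ^ m * monom 1 k \<in> V" using Mx by blast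
        thus ?thesis by auto
      qed
      have "V = UNIV" using subspace_from_monoms[OF sub] allm by blast
      thus ?thesis by blast
    next
      case False
      note not1 = False
      define S where "S = {n. monom 1 n \<in> V}"
      have S0: "0 \<notin> S" using False one unfolding S_def by simp
      have mset: "{monom 1 n | n. monom 1 n \<in> V} = range (\<lambda>i. monom (1::'a) (enumerate S i))"
        if "infinite S"
      proof -
        have r: "range (enumerate S) = S" using bij_enumerate[OF that] by (simp add: bij_betw_def)
        have "range (\<lambda>i. monom (1::'a) (enumerate S i)) = monom 1 ` range (enumerate S)"
          by (simp add: image_image)
        also have "\<dots> = monom 1 ` S" using r by simp
        also have "\<dots> = {monom 1 n | n. monom 1 n \<in> V}" unfolding S_def by auto
        finally show ?thesis by (rule sym)
      qed
      show ?thesis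
      proof (cases "\<exists>d::nat\<ge>1. \<forall>m::nat\<ge>1. m * d \<in> S")
        case True
        then obtain d :: nat where d: "d \<ge> 1" "\<forall>m::nat\<ge>1. m * d \<in> S" by blast
        define a :: "'a poly" where "a = monom 1 d"
        have apow: "\<forall>m\<ge>1. a ^ m \<in> V"
          using d unfolding a_def S_def by (simp add: monom_power mult.commute)
        have "\<forall>j. \<exists>M. \<forall>m\<ge>M. a ^ m * monom 1 j \<in> V" using Mx[OF apow] by blast
        then obtain Mf where Mf: "\<And>j m. m \<ge> Mf j \<Longrightarrow> a ^ m * monom 1 j \<in> V" by metis
        define Mm where "Mm = Max (Mf ` {..<d})"
        define N where "N = d * (Mm + 1)"
        have N1: "N \<ge> 1" using d unfolding N_def by simp
        have big: "monom 1 k \<in> V" if "k \<ge> N" for k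
        proof -
          have jd: "k mod d < d" using d by simp
          have "Mf (k mod d) \<le> Mm" unfolding Mm_def using jd by simp
          moreover have "k div d \<ge> Mm + 1"
            using that d unfolding N_def
            by (metis div_le_mono nonzero_mult_div_cancel_left not_one_le_zero)
          ultimately have "a ^ (k div d) * monom 1 (k mod d) \<in> V" using Mf by simp
          moreover have "a ^ (k div d) * monom 1 (k mod d) = monom 1 k"
            unfolding a_def by (simp add: monom_power mult_monom mult.commute)
          ultimately show ?thesis by simp
        qed
        have "{monom 1 N * p | p. True} \<subseteq> V"
        proof clarify
          fix p :: "'a poly"
          show "monom 1 N * p \<in> V"
            by (rule subspace_from_monoms[OF sub], rule big)
               (simp add: coeff_monom_mult split: if_splits)
        qed
        thus ?thesis using not1 N1 by blast
      next
        case False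
        show ?thesis
        proof (cases "finite S")
          case True
          have "V \<subseteq> poly_span (monom (1::'a) ` S)"
            proof -
            have "{monom 1 n | n. monom 1 n \<in> V} = monom (1::'a) ` S" by (auto simp: S_def)
            thus ?thesis using Vspan by simp
          qed
          hence "finite_dim V" unfolding finite_dim_def using True by blast
          thus ?thesis using not1 by blast
        next
          case inf: False
          have "strict_mono (enumerate S)" using inf by (simp add: strict_mono_def enumerate_mono)
          moreover have "\<forall>i. enumerate S i \<ge> 1"
            using enumerate_in_set[OF inf] S0 by (metis less_one not_le)
          moreover have "V = poly_span (range (\<lambda>i. monom 1 (enumerate S i)))"
            using Vspan mset[OF inf] by simp
          moreover have "range (enumerate S) = S"
            using bij_enumerate[OF inf] by (simp add: bij_betw_def)
          ultimately show ?thesis using False by metis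
        qed
      qed
    qed
  next
    assume C: "?C1 \<or> ?C2 \<or> ?C3 \<or> ?C4"
    have base: "\<exists>N. \<forall>m\<ge>N. a ^ m * b \<in> V" if "a = 0" for a b :: "'a poly"
      using zero that by (intro exI[of _ 1]) (auto simp: power_0_left)
    have one_not: "\<And>a. 1 \<notin> V \<Longrightarrow> \<forall>m\<ge>1. a ^ m \<in> V \<Longrightarrow> a \<noteq> 0 \<Longrightarrow> degree a \<ge> 1"
    proof (rule ccontr)
      fix a :: "'a poly"
      assume "1 \<notin> V" "\<forall>m\<ge>1. a ^ m \<in> V" "a \<noteq> 0" "\<not> degree a \<ge> 1"
      hence "monom 1 (1 * degree a) \<in> V" using power_monoms[OF assms] by blast
      moreover have "degree a = 0" using \<open>\<not> degree a \<ge> 1\<close> by simp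
      ultimately have "monom 1 0 \<in> V" by simp
      thus False using \<open>1 \<notin> V\<close> one by metis
    qed
    have "\<forall>a b. (\<forall>m\<ge>1. a ^ m \<in> V) \<longrightarrow> (\<exists>N. \<forall>m\<ge>N. a ^ m * b \<in> V)"
    proof (intro allI impI)
      fix a b :: "'a poly"
      assume ap: "\<forall>m\<ge>1. a ^ m \<in> V"
      show "\<exists>N. \<forall>m\<ge>N. a ^ m * b \<in> V"
      proof (cases "a = 0")
        case True then show ?thesis using base by blast
      next
        case anz: False
        have pm: "\<And>m. m \<ge> 1 \<Longrightarrow> monom 1 (m * degree a) \<in> V"
          using power_monoms[OF assms ap anz] by blast
        consider "?C1" | "?C2" | "?C3" | "?C4" using C by blast
        then show ?thesis
        proof cases
          case 1 then show ?thesis by blast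
        next
          case 2
          then obtain T where T: "finite T" "V \<subseteq> poly_span T" and n1: "1 \<notin> V"
            unfolding finite_dim_def by blast
          define B where "B = (\<Sum>s\<in>T. degree s)"
          have dg: "degree a \<ge> 1" using one_not[OF n1 ap anz] .
          let ?k = "(B + 1) * degree a"
          have "monom 1 ?k \<in> poly_span T" using pm[of "B+1"] T by auto
          then obtain s where s: "s \<in> T" "coeff s ?k \<noteq> 0"
            using span_coeff[of "monom 1 ?k" T ?k] by auto
          have "?k \<le> degree s" using s(2) le_degree by blast
          also have "\<dots> \<le> B" unfolding B_def using T(1) s(1) by (simp add: member_le_sum)
          finally have kB: "?k \<le> B" .
          have "(B + 1) * 1 \<le> ?k" using dg by (rule mult_le_mono2)
          from le_trans[OF this kB] have False by simp
          then show ?thesis ..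
        next
          case 3
          then obtain N where n1: "1 \<notin> V" and N: "N \<ge> 1" "{monom 1 N * p | p. True} \<subseteq> V"
            by blast
          have "coeff a 0 = 0"
          proof (rule ccontr)
            assume "coeff a 0 \<noteq> 0"
            moreover have "a \<in> V" using ap[rule_format, of 1] by simp
            ultimately have "monom 1 0 \<in> V" using hom_coeff[OF assms, of a 0] by blast
            thus False using n1 one by simp
          qed
          obtain c q where cq: "a = pCons c q" by (cases a) simp
          have "c = 0" using cq \<open>coeff a 0 = 0\<close> by simp
          hence q: "a = monom 1 1 * q" using cq by (simp add: monom_Suc one_pCons)
          have "a ^ m * b \<in> V" if "m \<ge> N" for m
          proof -
            have "a ^ m * b = monom 1 m * (q ^ m * b)"
              using q by (simp add: power_mult_distrib monom_power mult.assoc)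
            also have "\<dots> = monom 1 N * (monom 1 (m - N) * q ^ m * b)"
              using that by (simp add: mult_monom mult.assoc[symmetric])
            finally show ?thesis using N(2) by auto
          qed
          then show ?thesis by blast
        next
          case 4
          from 4 obtain n :: "nat \<Rightarrow> nat" where nn: "strict_mono n \<and> (\<forall>i. n i \<ge> 1)
         \<and> V = poly_span (range (\<lambda>i. monom 1 (n i)))
         \<and> \<not> (\<exists>d::nat\<ge>1. \<forall>m::nat\<ge>1. m * d \<in> range n)" ..
          have n1: "\<forall>i. n i \<ge> 1" using nn by (elim conjE)
          have n2: "V = poly_span (range (\<lambda>i. monom 1 (n i)))" using nn by (elim conjE)
          have n3: "\<not> (\<exists>d::nat\<ge>1. \<forall>m::nat\<ge>1. m * d \<in> range n)" using nn by (elim conjE)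
          note n = n1 n2 n3
          have rng: "range (\<lambda>i. monom 1 (n i)) = {monom (1::'a) k | k. k \<in> range n}" by auto
          have inr: "k \<in> range n" if "monom 1 k \<in> V" for k
            using span_monom_coeff[of "monom 1 k" "\<lambda>k. k \<in> range n" k] that n(2) rng by simp
          have "degree a \<ge> 1"
          proof (rule ccontr)
            assume "\<not> degree a \<ge> 1"
            hence "degree a = 0" by simp
            hence "monom 1 0 \<in> V" using pm[of 1] by simp
            hence "0 \<in> range n" by (rule inr)
            then obtain i where "0 = n i" by auto
            thus False using n(1)[rule_format, of i] by simp
          qed
          moreover have "\<forall>m::nat\<ge>1. m * degree a \<in> range n"
          proof (intro allI impI)
            fix m :: nat assume "m \<ge> 1"
            thus "m * degree a \<in> range n" using inr pm by simp
          qed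
          ultimately have "\<exists>d::nat\<ge>1. \<forall>m::nat\<ge>1. m * d \<in> range n" by blast
          hence False using n(3) by simp
          then show ?thesis ..
        qed
      qed
    qed
    thus "mathieu_subspace V" using sub unfolding mathieu_subspace_def by blast
  qed
qed

end
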